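(* For any integer $n\ge3$, with $P_n$ and $C_n$ the path and cycle of order $n$, $$\gamma_{(2,2,1)}(C_n)=\gamma_{(2,2,1)}(P_n)=\begin{cases} n-\lfloor n/7\rfloor+1 & \text{if } n\equiv1,2\pmod 7,\\ n-\lfloor n/7\rfloor & \text{otherwise.}\end{cases}$$
   Context: $N(v)$ is the open neighbourhood. $\gamma_{(2,2,1)}(G)$ is the minimum of $\sum_v f(v)$ over functions $f:V(G)\to\{0,1,2\}$ such that $\sum_{u\in N(v)}f(u)\ge 2$ whenever $f(v)\in\{0,1\}$ and $\sum_{u\in N(v)}f(u)\ge1$ whenever $f(v)=2$. *)

theory Defs
  imports Main
begin

text \<open>A graph is given by a finite vertex set V and the open neighbourhood map N.\<close>

definition is_221_fun :: "'a set \<Rightarrow> ('a \<Rightarrow> 'a set) \<Rightarrow> ('a \<Rightarrow> nat) \<Rightarrow> bool" where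
  "is_221_fun V N f \<longleftrightarrow>
     (\<forall>v\<in>V. f v \<le> 2) \<and>
     (\<forall>v\<in>V. f v \<le> 1 \<longrightarrow> (\<Sum>u\<in>N v. f u) \<ge> 2) \<and>
     (\<forall>v\<in>V. f v = 2 \<longrightarrow> (\<Sum>u\<in>N v. f u) \<ge> 1)"

definition gamma221 :: "'a set \<Rightarrow> ('a \<Rightarrow> 'a set) \<Rightarrow> nat" where
  "gamma221 V N = (LEAST w. \<exists>f. is_221_fun V N f \<and> w = (\<Sum>v\<in>V. f v))"

definition path_nbhd :: "nat \<Rightarrow> nat \<Rightarrow> nat set" where
  "path_nbhd n v = {u \<in> {0..<n}. u + 1 = v \<or> v + 1 = u}"

definition cycle_nbhd :: "nat \<Rightarrow> nat \<Rightarrow> nat set" where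
  "cycle_nbhd n v = {u \<in> {0..<n}. u \<noteq> v \<and> ((u + 1) mod n = v \<or> (v + 1) mod n = u)}"

end

theory Submission imports Defs begin

definition okk :: "nat \<Rightarrow> nat \<Rightarrow> nat \<Rightarrow> bool" where
  "okk a b c \<longleftrightarrow> (if b \<le> 1 then 2 \<le> a + c else 1 \<le> a + c)"

definition tbl :: "int list list list list list" where
  "tbl = [[[[[-1, 0, 0, 2, 3, 3, 4], [0, 1, 1, 2, 3, 4, 4], [0, 1, 2, 2, 4, 5, 5]], [[0, 0, 1, 2, 3, 3, 5], [0, 1, 2, 3, 4, 4, 5], [0, 2, 3, 3, 4, 5, 6]], [[0, 0, 2, 3, 3, 4, 5], [0, 1, 2, 3, 3, 5, 6], [1, 2, 3, 4, 4, 6, 7]]], [[[0, 0, 1, 2, 3, 3, 5], [0, 1, 1, 3, 4, 4, 5], [1, 2, 2, 3, 4, 5, 5]], [[0, 0, 2, 3, 3, 4, 5], [1, 1, 2, 3, 4, 5, 6], [1, 2, 3, 3, 5, 6, 6]], [[0, 1, 2, 3, 3, 5, 6], [0, 2, 3, 3, 4, 5, 6], [1, 3, 4, 4, 5, 6, 7]]], [[[0, 0, 2, 3, 3, 4, 5], [1, 1, 2, 3, 4, 4, 6], [1, 2, 2, 4, 5, 5, 6]], [[0, 1, 2, 3, 3, 5, 6], [1, 2, 3, 4, 4, 5, 6], [2, 3, 3, 4, 5, 6, 6]], [[0, 2, 3, 3, 4, 5, 6], [1, 2, 3, 3, 5, 6, 6], [2, 3, 4, 4, 6, 7, 7]]]],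 [[[[0, 1, 1, 2, 3, 4, 4], [0, 1, 2, 2, 4, 5, 5], [0, 2, 3, 3, 4, 5, 6]], [[0, 1, 1, 3, 4, 4, 5], [1, 2, 2, 3, 4, 5, 6], [1, 2, 3, 4, 4, 6, 7]], [[1, 1, 2, 3, 4, 4, 6], [1, 1, 3, 4, 4, 5, 6], [2, 2, 4, 5, 5, 6, 7]]], [[[0, 1, 2, 3, 4, 4, 5], [1, 2, 2, 3, 4, 5, 6], [1, 2, 3, 4, 5, 6, 6]], [[1, 1, 2, 3, 4, 5, 6], [1, 2, 3, 4, 5, 5, 6], [2, 3, 4, 4, 5, 6, 7]], [[1, 2, 3, 4, 4, 5, 6], [1, 2, 3, 4, 5, 6, 7], [2, 3, 4, 5, 6, 7, 8]]], [[[0, 1, 2, 3, 3, 5, 6], [1, 1, 3, 4, 4, 5, 6], [2, 2, 3, 4, 5, 5, 7]], [[0, 2, 3, 3, 4, 5, 6], [1, 2, 3, 4, 5, 6, 7], [2, 3, 3, 5, 6, 6, 7]], [[1, 2, 3, 3, 5, 6, 6], [2, 3, 3, 4, 5, 6, 6], [3, 4, 4, 5, 6, 7, 7]]]], [[[[0, 1, 2, 2, 4, 5, 5], [0, 2, 3, 3, 4, 5, 6], [1, 2, 3, 4, 4, 6, 7]], [[1, 2, 2, 3, 4, 5, 5], [1, 2, 3, 4, 5, 6, 6], [2, 2, 4, 5, 5, 6, 7]], [[1, 2, 2, 4, 5, 5, 6], [2, 2, 3, 4, 5, 5, 7], [3, 3, 4, 5, 6, 6, 8]]], [[[0, 2,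 3, 3, 4, 5, 6], [1, 2, 3, 4, 4, 6, 7], [2, 2, 4, 5, 5, 6, 7]], [[1, 2, 3, 3, 5, 6, 6], [2, 3, 4, 4, 5, 6, 7], [3, 3, 4, 5, 6, 6, 8]], [[2, 3, 3, 4, 5, 6, 6], [2, 3, 3, 5, 6, 6, 7], [3, 4, 4, 6, 7, 7, 8]]], [[[1, 2, 3, 4, 4, 6, 7], [2, 2, 4, 5, 5, 6, 7], [3, 3, 4, 5, 6, 6, 8]], [[1, 3, 4, 4, 5, 6, 7], [2, 3, 4, 5, 6, 7, 8], [3, 4, 4, 6, 7, 7, 8]], [[2, 3, 4, 4, 6, 7, 7], [3, 4, 4, 5, 6, 7, 7], [4, 5, 5, 6, 7, 8, 8]]]]]"

definition TT :: "nat \<Rightarrow> nat \<Rightarrow> nat \<Rightarrow> nat \<Rightarrow> nat \<Rightarrow> int" where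
  "TT s1 s2 a b r = tbl ! s1 ! s2 ! a ! b ! r"

definition check_step :: bool where
  "check_step = list_all (\<lambda>s1. list_all (\<lambda>s2. list_all (\<lambda>a. list_all (\<lambda>b. list_all (\<lambda>c. list_all (\<lambda>r.
     \<not> okk a b c \<or> 6 * int ((r+1) div 7) + TT s1 s2 b c ((r+1) mod 7) \<le> TT s1 s2 a b r + int c)
     [0..<7]) [0..<3]) [0..<3]) [0..<3]) [0..<3]) [0..<3]"

definition check_base :: bool where
  "check_base = list_all (\<lambda>g0. list_all (\<lambda>g1. list_all (\<lambda>g2. list_all (\<lambda>g3. list_all (\<lambda>g4.
     \<not> (okk g0 g1 g2 \<and> okk g1 g2 g3 \<and> okk g2 g3 g4) \<or> TT g0 g1 g3 g4 5 \<le> int (g0+g1+g2+g3+g4))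
     [0..<3]) [0..<3]) [0..<3]) [0..<3]) [0..<3]"

definition check_path :: bool where
  "check_path = list_all (\<lambda>r. list_all (\<lambda>b. list_all (\<lambda>c.
     int (r + (if r = 1 \<or> r = 2 then 1 else 0)) \<le> 6 * int ((r+2) div 7) + TT 0 b c 0 ((r+2) mod 7))
     [0..<3]) [0..<3]) [0..<7]"

definition check_cyc :: bool where
  "check_cyc = list_all (\<lambda>r. list_all (\<lambda>a. list_all (\<lambda>b.
     int (r + (if r = 1 \<or> r = 2 then 1 else 0)) \<le> 6 * int ((r+2) div 7) + TT a b a b ((r+2) mod 7) - int a - int b)
     [0..<3]) [0..<3]) [0..<7]"

lemma cs: check_step by code_simp
lemma cb: check_base by code_simp
lemma cp: check_path by code_simp
lemma cc: check_cyc by code_simp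

lemma step_fact:
  assumes "s1 < 3" "s2 < 3" "a < 3" "b < 3" "c < 3" "r < 7" "okk a b c"
  shows "6 * int ((r+1) div 7) + TT s1 s2 b c ((r+1) mod 7) \<le> TT s1 s2 a b r + int c"
proof -
  have m: "s1 \<in> set [0..<3]" "s2 \<in> set [0..<3]" "a \<in> set [0..<3]" "b \<in> set [0..<3]" "c \<in> set [0..<3]" "r \<in> set [0..<7]"
    using assms by auto
  show ?thesis using cs m assms(7) unfolding check_step_def list_all_iff by blast
qed

lemma base_fact:
  assumes "g0 < 3" "g1 < 3" "g2 < 3" "g3 < 3" "g4 < 3" "okk g0 g1 g2" "okk g1 g2 g3" "okk g2 g3 g4"
  shows "TT g0 g1 g3 g4 5 \<le> int (g0+g1+g2+g3+g4)"
proof -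
  have m: "g0 \<in> set [0..<3]" "g1 \<in> set [0..<3]" "g2 \<in> set [0..<3]" "g3 \<in> set [0..<3]" "g4 \<in> set [0..<3]"
    using assms by auto
  show ?thesis using cb m assms(6-8) unfolding check_base_def list_all_iff by blast
qed

lemma path_fact:
  assumes "r < 7" "b < 3" "c < 3"
  shows "int (r + (if r = 1 \<or> r = 2 then 1 else 0)) \<le> 6 * int ((r+2) div 7) + TT 0 b c 0 ((r+2) mod 7)"
proof -
  have m: "r \<in> set [0..<7]" "b \<in> set [0..<3]" "c \<in> set [0..<3]" using assms by auto
  show ?thesis using cp m unfolding check_path_def list_all_iff by blast
qed

lemma cyc_fact:
  assumes "r < 7" "a < 3" "b < 3"
  shows "int (r + (if r = 1 \<or> r = 2 then 1 else 0)) \<le> 6 * int ((r+2) div 7) + TT a b a b ((r+2) mod 7) - int a - int b"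
proof -
  have m: "r \<in> set [0..<7]" "a \<in> set [0..<3]" "b \<in> set [0..<3]" using assms by auto
  show ?thesis using cc m unfolding check_cyc_def list_all_iff by blast
qed

lemma dp:
  fixes g :: "nat \<Rightarrow> nat"
  assumes "m \<ge> 5" "\<forall>i<m. g i \<le> 2" "\<forall>i. 0 < i \<and> i + 1 < m \<longrightarrow> okk (g (i-1)) (g i) (g (i+1))"
  shows "6 * int (m div 7) + TT (g 0) (g 1) (g (m-2)) (g (m-1)) (m mod 7) \<le> int (\<Sum>i<m. g i)"
  using assms
proof (induction m rule: nat_induct_at_least)
  case base
  have "TT (g 0) (g 1) (g 3) (g 4) 5 \<le> int (g 0 + g 1 + g 2 + g 3 + g 4)"
  proof (rule base_fact)
    show "g 0 < 3" "g 1 < 3" "g 2 < 3" "g 3 < 3" "g 4 < 3"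
      using base.prems(1)[rule_format, of 0] base.prems(1)[rule_format, of 1] base.prems(1)[rule_format, of 2]
        base.prems(1)[rule_format, of 3] base.prems(1)[rule_format, of 4] by auto
    show "okk (g 0) (g 1) (g 2)" using base.prems(2)[rule_format, of 1] by (simp add: numeral_2_eq_2)
    show "okk (g 1) (g 2) (g 3)" using base.prems(2)[rule_format, of 2] by simp
    show "okk (g 2) (g 3) (g 4)" using base.prems(2)[rule_format, of 3] by simp
  qed
  moreover have "(\<Sum>i<5. g i) = g 0 + g 1 + g 2 + g 3 + g 4"
    by (simp add: numeral_eq_Suc)
  ultimately show ?case by simp
next
  case (Suc m)
  have IH: "6 * int (m div 7) + TT (g 0) (g 1) (g (m-2)) (g (m-1)) (m mod 7) \<le> int (\<Sum>i<m. g i)"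
    using Suc.IH Suc.prems by auto
  have ok0: "okk (g (m-1-1)) (g (m-1)) (g (m-1+1))"
    using Suc.prems(2)[rule_format, of "m-1"] Suc.hyps by simp
  have "m-1-1 = m-2" "m-1+1 = m" using Suc.hyps by auto
  with ok0 have ok: "okk (g (m-2)) (g (m-1)) (g m)" by simp
  have b: "g 0 < 3" "g 1 < 3" "g (m-2) < 3" "g (m-1) < 3" "g m < 3"
    using Suc.prems(1)[rule_format, of 0] Suc.prems(1)[rule_format, of 1] Suc.prems(1)[rule_format, of "m-2", OF diff_less_Suc]
      Suc.prems(1)[rule_format, of "m-1", OF diff_less_Suc] Suc.prems(1)[rule_format, of m] Suc.hyps by auto
  have sf: "6 * int ((m mod 7 + 1) div 7) + TT (g 0) (g 1) (g (m-1)) (g m) ((m mod 7 + 1) mod 7)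
     \<le> TT (g 0) (g 1) (g (m-2)) (g (m-1)) (m mod 7) + int (g m)"
    using step_fact[OF b _ ok, of "m mod 7"] by simp
  have d: "Suc m div 7 = m div 7 + (m mod 7 + 1) div 7" "Suc m mod 7 = (m mod 7 + 1) mod 7"
    by (simp_all add: div_Suc mod_Suc) 
  have e: "Suc m - 2 = m - 1" "Suc m - 1 = m" using Suc.hyps by auto
  show ?case using IH sf unfolding d e by simp
qed

lemma path_nbhd_eq: "path_nbhd n v = (if 0 < v \<and> v \<le> n then {v-1} else {}) \<union> (if v+1 < n then {v+1} else {})"
  unfolding path_nbhd_def by auto

lemma path_sum:
  assumes "v < n"
  shows "(\<Sum>u\<in>path_nbhd n v. f u) = (if 0 < v then f (v-1) else 0) + (if v+1 < n then f (v+1) else 0)"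
proof -
  have "(if 0 < v \<and> v \<le> n then {v-1} else {}) \<inter> (if v+1 < n then {v+1} else {}) = {}" by auto
  then have "(\<Sum>u\<in>path_nbhd n v. f u) = (\<Sum>u\<in>(if 0 < v \<and> v \<le> n then {v-1} else {}). f u) + (\<Sum>u\<in>(if v+1 < n then {v+1} else {}). f u)"
    unfolding path_nbhd_eq by (rule sum.union_disjoint[rotated 2]) auto
  then show ?thesis using assms by auto
qed

lemma cycle_nbhd_eq:
  assumes "n \<ge> 3" "v < n"
  shows "cycle_nbhd n v = {if 0 < v then v-1 else n-1, if v+1 < n then v+1 else 0}"
proof -
  have A: "(u+1) mod n = v \<longleftrightarrow> u = (if 0 < v then v-1 else n-1)" if "u < n" for u
  proof (cases "u+1 < n")
    case True then show ?thesis using that assms by auto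
  next
    case False then have "u = n-1" using that by auto
    then show ?thesis using assms by auto
  qed
  have B: "(v+1) mod n = (if v+1 < n then v+1 else 0)"
  proof (cases "v+1 < n")
    case False then have "v+1 = n" using assms by auto
    then show ?thesis by simp
  qed auto
  let ?l = "if 0 < v then v-1 else n-1" and ?r = "if v+1 < n then v+1 else 0"
  show ?thesis
  proof (intro equalityI subsetI)
    fix u assume "u \<in> cycle_nbhd n v"
    then have u: "u < n" "(u+1) mod n = v \<or> (v+1) mod n = u" unfolding cycle_nbhd_def by auto
    then show "u \<in> {?l, ?r}" using A[OF u(1)] B by auto
  next
    fix u assume "u \<in> {?l, ?r}"
    then have "u = ?l \<or> u = ?r" by auto
    then show "u \<in> cycle_nbhd n v"
    proof
      assume "u = ?l"
      moreover have "?l < n" "?l \<noteq> v" using assms by auto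
      ultimately show ?thesis using A[of u] unfolding cycle_nbhd_def by auto
    next
      assume "u = ?r"
      moreover have "?r < n" "?r \<noteq> v" using assms by auto
      ultimately show ?thesis using B unfolding cycle_nbhd_def by auto
    qed
  qed
qed

lemma cycle_sum:
  assumes "n \<ge> 3" "v < n"
  shows "(\<Sum>u\<in>cycle_nbhd n v. f u) = (if 0 < v then f (v-1) else f (n-1)) + (if v+1 < n then f (v+1) else f 0)"
proof -
  have ne: "(if 0 < v then v-1 else n-1) \<noteq> (if v+1 < n then v+1 else 0)" using assms by auto
  show ?thesis unfolding cycle_nbhd_eq[OF assms] using ne by (auto split: if_splits)
qed

lemma okk_valid:
  assumes "okk l x r" "x \<le> 2"
  shows "(x \<le> 1 \<longrightarrow> l + r \<ge> 2) \<and> (x = 2 \<longrightarrow> l + r \<ge> 1)"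
  using assms unfolding okk_def by (auto split: if_splits)

definition FF :: "nat \<Rightarrow> nat" where
  "FF n = (if n mod 7 = 1 \<or> n mod 7 = 2 then n - n div 7 + 1 else n - n div 7)"

lemma FF_int: "int (FF n) = 6 * int (n div 7) + int (n mod 7 + (if n mod 7 = 1 \<or> n mod 7 = 2 then 1 else 0))"
proof -
  have h: "int n = 7 * int (n div 7) + int (n mod 7)"
    by (metis of_nat_add of_nat_mult div_mult_mod_eq of_nat_numeral mult.commute)
  have "n div 7 \<le> n" by simp
  then have h2: "int (n - n div 7) = int n - int (n div 7)" by (simp add: of_nat_diff)
  show ?thesis unfolding FF_def using h h2 by auto
qed

lemma path_lower:
  assumes n: "n \<ge> 3" and f: "is_221_fun {0..<n} (path_nbhd n) f"
  shows "FF n \<le> (\<Sum>v\<in>{0..<n}. f v)"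
proof -
  define g where "g i = (if 0 < i \<and> i \<le> n then f (i-1) else 0)" for i
  have fb: "f v \<le> 2" and fo: "okk (if 0 < v then f (v-1) else 0) (f v) (if v+1 < n then f (v+1) else 0)" if "v < n" for v
  proof -
    show "f v \<le> 2" using f that unfolding is_221_fun_def by auto
    have "f v \<le> 1 \<longrightarrow> 2 \<le> (\<Sum>u\<in>path_nbhd n v. f u)" "f v = 2 \<longrightarrow> 1 \<le> (\<Sum>u\<in>path_nbhd n v. f u)"
      using f that unfolding is_221_fun_def by auto
    then show "okk (if 0 < v then f (v-1) else 0) (f v) (if v+1 < n then f (v+1) else 0)"
      using \<open>f v \<le> 2\<close> unfolding okk_def path_sum[OF that] by auto
  qed
  have g1: "\<forall>i<n+2. g i \<le> 2" using fb unfolding g_def by auto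
  have g2: "\<forall>i. 0 < i \<and> i + 1 < n+2 \<longrightarrow> okk (g (i-1)) (g i) (g (i+1))"
  proof (intro allI impI)
    fix i assume i: "0 < i \<and> i + 1 < n + 2"
    have e1: "g (i-1) = (if 0 < i-1 then f (i-1-1) else 0)" unfolding g_def using i by auto
    have e2: "g i = f (i-1)" unfolding g_def using i by auto
    have e3: "g (i+1) = (if i-1+1 < n then f (i-1+1) else 0)" unfolding g_def using i by auto
    show "okk (g (i-1)) (g i) (g (i+1))" unfolding e1 e2 e3 using fo[of "i-1"] i by (cases "i = 1") auto
  qed
  note dp1 = dp[of "n+2" g, OF _ g1 g2]
  have "(\<Sum>i<n+2. g i) = g 0 + (\<Sum>i<n. g (Suc i)) + g (Suc n)"
  proof -
    have "(\<Sum>i<n+2. g i) = g 0 + (\<Sum>i<Suc n. g (Suc i))"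
      using sum.lessThan_Suc_shift[of g "Suc n"] by simp
    then show ?thesis by simp
  qed
  also have "\<dots> = (\<Sum>i<n. f i)" unfolding g_def by simp
  finally have S: "(\<Sum>i<n+2. g i) = (\<Sum>i<n. f i)" .
  have e: "n + 2 - 2 = n" "n+2-1 = n+1" "g 0 = 0" "g (n+1) = 0" unfolding g_def by auto
  have d: "(n+2) div 7 = n div 7 + (n mod 7 + 2) div 7" "(n+2) mod 7 = (n mod 7 + 2) mod 7" by presburger+
  have b: "g 1 < 3" "g n < 3" using g1[rule_format, of 1] g1[rule_format, of n] n by auto
  note P = path_fact[OF _ b, of "n mod 7"]
  have "int (FF n) \<le> int (\<Sum>i<n. f i)"
    using dp1 P n unfolding S e d FF_int by simp
  then have "FF n \<le> (\<Sum>i<n. f i)" by linarith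
  then show ?thesis by (simp add: atLeast0LessThan)
qed

lemma cycle_lower:
  assumes n: "n \<ge> 3" and f: "is_221_fun {0..<n} (cycle_nbhd n) f"
  shows "FF n \<le> (\<Sum>v\<in>{0..<n}. f v)"
proof -
  define g where "g i = f ((i + n - 1) mod n)" for i
  have fb: "f v \<le> 2" and fo: "okk (if 0 < v then f (v-1) else f (n-1)) (f v) (if v+1 < n then f (v+1) else f 0)" if "v < n" for v
  proof -
    show "f v \<le> 2" using f that unfolding is_221_fun_def by auto
    have "f v \<le> 1 \<longrightarrow> 2 \<le> (\<Sum>u\<in>cycle_nbhd n v. f u)" "f v = 2 \<longrightarrow> 1 \<le> (\<Sum>u\<in>cycle_nbhd n v. f u)"
      using f that unfolding is_221_fun_def by auto
    then show "okk (if 0 < v then f (v-1) else f (n-1)) (f v) (if v+1 < n then f (v+1) else f 0)"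
      using \<open>f v \<le> 2\<close> unfolding okk_def cycle_sum[OF n that] by auto
  qed
  have gS: "g j = f ((j - 1) mod n)" if "j \<ge> 1" for j
  proof -
    have "j + n - 1 = (j - 1) + n" using that by auto
    then show ?thesis unfolding g_def by simp
  qed
  have g0: "g 0 = f (n-1)" unfolding g_def using n by simp
  have g1: "\<forall>i<n+2. g i \<le> 2" using fb n unfolding g_def by auto
  have g2: "\<forall>i. 0 < i \<and> i + 1 < n+2 \<longrightarrow> okk (g (i-1)) (g i) (g (i+1))"
  proof (intro allI impI)
    fix i assume i: "0 < i \<and> i + 1 < n + 2"
    have e1: "g (i-1) = (if 0 < i-1 then f (i-1-1) else f (n-1))"
    proof (cases "i = 1")
      case True then show ?thesis using g0 by simp
    next
      case False
      then have "i - 1 \<ge> 1" "i - 1 - 1 < n" using i by auto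
      then show ?thesis using gS[of "i-1"] False by simp
    qed
    have "i - 1 < n" using i by auto
    then have e2: "g i = f (i-1)" using gS[of i] i by simp
    have e3: "g (i+1) = (if i-1+1 < n then f (i-1+1) else f 0)"
    proof (cases "i = n")
      case True then show ?thesis using gS[of "i+1"] n by simp
    next
      case False then show ?thesis using gS[of "i+1"] i by simp
    qed
    show "okk (g (i-1)) (g i) (g (i+1))" unfolding e1 e2 e3 using fo[of "i-1"] i by (cases "i = 1") auto
  qed
  note dp1 = dp[of "n+2" g, OF _ g1 g2]
  have "(\<Sum>i<n+2. g i) = g 0 + (\<Sum>i<n. g (Suc i)) + g (Suc n)"
  proof -
    have "(\<Sum>i<n+2. g i) = g 0 + (\<Sum>i<Suc n. g (Suc i))"
      using sum.lessThan_Suc_shift[of g "Suc n"] by simp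
    then show ?thesis by simp
  qed
  also have "(\<Sum>i<n. g (Suc i)) = (\<Sum>i<n. f i)"
    by (rule sum.cong) (auto simp: gS)
  finally have S: "(\<Sum>i<n+2. g i) = g 0 + (\<Sum>i<n. f i) + g (Suc n)" .
  have e: "n + 2 - 2 = n" "n+2-1 = n+1" "g n = g 0" "g (n+1) = g 1"
    using n g0 gS[of n] gS[of "n+1"] gS[of 1] by auto
  have d: "(n+2) div 7 = n div 7 + (n mod 7 + 2) div 7" "(n+2) mod 7 = (n mod 7 + 2) mod 7" by presburger+
  have b: "g 0 < 3" "g 1 < 3" using g1[rule_format, of 0] g1[rule_format, of 1] by auto
  have P: "int (n mod 7 + (if n mod 7 = 1 \<or> n mod 7 = 2 then 1 else 0)) \<le> 6 * int ((n mod 7 + 2) div 7) + TT (g 0) (g 1) (g 0) (g 1) ((n mod 7 + 2) mod 7) - int (g 0) - int (g 1)"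
    using cyc_fact[OF _ b, of "n mod 7"] by simp
  have A: "6 * int ((n+2) div 7) + TT (g 0) (g 1) (g 0) (g 1) ((n+2) mod 7) \<le> int (g 0 + (\<Sum>i<n. f i) + g (Suc n))"
    using dp1 n unfolding S e by simp
  have A2: "6 * int (n div 7) + 6 * int ((n mod 7 + 2) div 7) + TT (g 0) (g 1) (g 0) (g 1) ((n mod 7 + 2) mod 7) \<le> int (g 0) + int (\<Sum>i<n. f i) + int (g 1)"
    using A unfolding d e(4)[simplified] by simp
  have "int (FF n) \<le> int (\<Sum>i<n. f i)"
    using A2 P FF_int[of n] by linarith
  then have "FF n \<le> (\<Sum>i<n. f i)" by linarith
  then show ?thesis by (simp add: atLeast0LessThan)
qed

definition pat :: "nat list" where "pat = [0,2,1,0,1,2,0]"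

definition vl :: "nat list \<Rightarrow> bool" where
  "vl xs \<longleftrightarrow> (\<forall>i<length xs. xs!i \<le> 2 \<and>
     okk (if 0 < i then xs!(i-1) else 0) (xs!i) (if i+1 < length xs then xs!(i+1) else 0))"

lemma vl_code: "vl xs = list_all (\<lambda>i. xs!i \<le> 2 \<and>
     okk (if 0 < i then xs!(i-1) else 0) (xs!i) (if i+1 < length xs then xs!(i+1) else 0)) [0..<length xs]"
  unfolding vl_def list_all_iff set_upt atLeastLessThan_iff Ball_def by (intro iff_allI) simp

lemma vl_pat:
  assumes "vl xs" shows "vl (pat @ xs)"
  unfolding vl_def
proof (intro allI impI)
  fix i assume i: "i < length (pat @ xs)"
  have l: "length pat = 7" by (simp add: pat_def)
  show "(pat @ xs) ! i \<le> 2 \<and> okk (if 0 < i then (pat @ xs) ! (i - 1) else 0) ((pat @ xs) ! i)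
          (if i + 1 < length (pat @ xs) then (pat @ xs) ! (i + 1) else 0)"
  proof (cases "i < 7")
    case True
    then have "i = 0 \<or> i = 1 \<or> i = 2 \<or> i = 3 \<or> i = 4 \<or> i = 5 \<or> i = 6" by auto
    then show ?thesis
    proof (elim disjE)
      assume "i = 6" then show ?thesis by (cases xs) (auto simp: pat_def okk_def)
    qed (auto simp: pat_def okk_def)
  next
    case False
    then obtain j where ij: "i = j + 7" by (metis add.commute less_imp_add_positive not_less_iff_gr_or_eq nat_le_iff_add not_less)
    have j: "j < length xs" using i ij l by simp
    have v: "xs!j \<le> 2 \<and> okk (if 0 < j then xs!(j-1) else 0) (xs!j) (if j+1 < length xs then xs!(j+1) else 0)"
      using assms j unfolding vl_def by blast
    have e1: "(pat @ xs) ! i = xs ! j" using ij l by (simp add: nth_append)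
    have e2: "(if 0 < i then (pat @ xs) ! (i - 1) else 0) = (if 0 < j then xs!(j-1) else 0)"
    proof (cases j)
      case 0 then show ?thesis using ij by (simp add: pat_def)
    next
      case (Suc k) then show ?thesis using ij l by (simp add: nth_append)
    qed
    have e3: "(if i + 1 < length (pat @ xs) then (pat @ xs) ! (i + 1) else 0) = (if j+1 < length xs then xs!(j+1) else 0)"
      using ij l by (simp add: nth_append)
    show ?thesis unfolding e1 e2 e3 using v by blast
  qed
qed

lemma vl_rep: "vl xs \<Longrightarrow> vl (concat (replicate k pat) @ xs)"
  by (induction k) (simp_all add: vl_pat)

lemma len_rep: "length (concat (replicate k pat)) = 7 * k"
  by (induction k) (simp_all add: pat_def)

lemma sum_rep: "sum_list (concat (replicate k pat)) = 6 * k"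
  by (induction k) (simp_all add: pat_def)

lemma vl_u: "vl []" "vl [0,2,1,0,1,2,2,0]" "vl [1,2]" "vl [0,2,1]" "vl [0,2,2,0]" "vl [0,2,1,2,0]" "vl [0,2,1,0,1,2]"
  by (simp_all only: vl_code) code_simp+

lemma construct:
  assumes "n \<ge> 3"
  shows "\<exists>xs. length xs = n \<and> vl xs \<and> sum_list xs = FF n"
proof -
  define q where "q = n div 7"
  define r where "r = n mod 7"
  have nq: "n = 7 * q + r" unfolding q_def r_def by simp
  have r7: "r < 7" unfolding r_def by simp
  have "r = 0 \<or> r = 1 \<or> r = 2 \<or> r = 3 \<or> r = 4 \<or> r = 5 \<or> r = 6" using r7 by auto
  moreover have FFq: "FF n = (if r = 1 \<or> r = 2 then 6 * q + r + 1 else 6 * q + r)"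
    unfolding FF_def q_def[symmetric] r_def[symmetric] using nq by auto
  ultimately show ?thesis
  proof (elim disjE)
    assume "r = 0"
    then show ?thesis using FFq nq vl_rep[OF vl_u(1), of q] len_rep[of q] sum_rep[of q]
      by (intro exI[of _ "concat (replicate q pat) @ []"]) auto
  next
    assume r1: "r = 1"
    then have "q \<ge> 1" using nq assms by (cases q) auto
    then show ?thesis using r1 FFq nq vl_rep[OF vl_u(2), of "q-1"] len_rep[of "q-1"] sum_rep[of "q-1"]
      by (intro exI[of _ "concat (replicate (q-1) pat) @ [0,2,1,0,1,2,2,0]"]) auto
  next
    assume "r = 2"
    then show ?thesis using FFq nq vl_rep[OF vl_u(3), of q] len_rep[of q] sum_rep[of q]
      by (intro exI[of _ "concat (replicate q pat) @ [1,2]"]) auto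
  next
    assume "r = 3"
    then show ?thesis using FFq nq vl_rep[OF vl_u(4), of q] len_rep[of q] sum_rep[of q]
      by (intro exI[of _ "concat (replicate q pat) @ [0,2,1]"]) auto
  next
    assume "r = 4"
    then show ?thesis using FFq nq vl_rep[OF vl_u(5), of q] len_rep[of q] sum_rep[of q]
      by (intro exI[of _ "concat (replicate q pat) @ [0,2,2,0]"]) auto
  next
    assume "r = 5"
    then show ?thesis using FFq nq vl_rep[OF vl_u(6), of q] len_rep[of q] sum_rep[of q]
      by (intro exI[of _ "concat (replicate q pat) @ [0,2,1,2,0]"]) auto
  next
    assume "r = 6"
    then show ?thesis using FFq nq vl_rep[OF vl_u(7), of q] len_rep[of q] sum_rep[of q]
      by (intro exI[of _ "concat (replicate q pat) @ [0,2,1,0,1,2]"]) auto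
  qed
qed

lemma vl_path:
  assumes "vl xs" "length xs = n"
  shows "is_221_fun {0..<n} (path_nbhd n) (\<lambda>v. xs ! v)"
  unfolding is_221_fun_def
proof (intro conjI ballI)
  fix v assume "v \<in> {0..<n}"
  then have v: "v < n" by simp
  have h: "xs!v \<le> 2 \<and> okk (if 0 < v then xs!(v-1) else 0) (xs!v) (if v+1 < n then xs!(v+1) else 0)"
    using assms v unfolding vl_def by blast
  note s = path_sum[OF v, of "\<lambda>v. xs ! v"]
  show "xs ! v \<le> 2" using h by blast
  show "xs ! v \<le> 1 \<longrightarrow> 2 \<le> (\<Sum>u\<in>path_nbhd n v. xs ! u)" using h unfolding s okk_def by auto
  show "xs ! v = 2 \<longrightarrow> 1 \<le> (\<Sum>u\<in>path_nbhd n v. xs ! u)" using h unfolding s okk_def by auto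
qed

lemma path_to_cycle:
  assumes "n \<ge> 3" "is_221_fun {0..<n} (path_nbhd n) f"
  shows "is_221_fun {0..<n} (cycle_nbhd n) f"
proof -
  have sub: "(\<Sum>u\<in>path_nbhd n v. f u) \<le> (\<Sum>u\<in>cycle_nbhd n v. f u)" if "v < n" for v
  proof (rule sum_mono2)
    show "finite (cycle_nbhd n v)" unfolding cycle_nbhd_def by simp
    show "path_nbhd n v \<subseteq> cycle_nbhd n v"
      unfolding path_nbhd_def cycle_nbhd_def using that by auto
  qed auto
  show ?thesis using assms(2) sub unfolding is_221_fun_def
    by (meson atLeastLessThan_iff order_trans)
qed

lemma gamma_eq:
  assumes "\<exists>f. is_221_fun V N f \<and> w = (\<Sum>v\<in>V. f v)" "\<And>f. is_221_fun V N f \<Longrightarrow> w \<le> (\<Sum>v\<in>V. f v)"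
  shows "gamma221 V N = w"
  unfolding gamma221_def
  by (rule Least_equality) (use assms in auto)

theorem proposition30:
  fixes n :: nat
  assumes "n \<ge> 3"
  shows "gamma221 {0..<n} (cycle_nbhd n) = gamma221 {0..<n} (path_nbhd n) \<and>
         gamma221 {0..<n} (path_nbhd n) =
           (if n mod 7 = 1 \<or> n mod 7 = 2 then n - n div 7 + 1 else n - n div 7)"
proof -
  obtain xs where xs: "length xs = n" "vl xs" "sum_list xs = FF n" using construct[OF assms] by blast
  have fp: "is_221_fun {0..<n} (path_nbhd n) (\<lambda>v. xs ! v)" using vl_path[OF xs(2,1)] .
  have sm: "(\<Sum>v\<in>{0..<n}. xs ! v) = FF n" using xs(1,3) by (simp add: sum_list_sum_nth)
  have P: "gamma221 {0..<n} (path_nbhd n) = FF n"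
    by (rule gamma_eq) (use fp sm path_lower[OF assms] in auto)
  have C: "gamma221 {0..<n} (cycle_nbhd n) = FF n"
    by (rule gamma_eq) (use path_to_cycle[OF assms fp] sm cycle_lower[OF assms] in auto)
  show ?thesis using P C unfolding FF_def by simp
qed
end
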